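(* Let $G$ be a graph with vertex set $V$ of order $n$ and let $k$ be an integer with $2(k-1)>n\ge 2$. Let $H$ be the graph with vertex set $V\cup V'\cup W$, where $V'=\{u':u\in V\}$ is a set of $n$ new vertices and $W$ is a set of $2(k-1)$ new vertices, whose edges are: all edges of $G$; the edges $uu'$ for $u\in V$; $k-1$ pairwise disjoint edges covering $W$ (so $H[W]\cong (k-1)K_2$); and all edges between $V$ and $W$ (no edges between $V'$ and $W$, and no further edges). Then $\alpha(H)=n+k-1$, $\mathrm{diss}(H)=n+2(k-1)$, $\nu_s(H)\ge k-1$, and $$\alpha(G)\ge k\iff \nu_s(H)\ge k \iff \mathrm{diss}(H)\ne \alpha(H)+\nu_s(H).$$
   Context: All graphs are finite, simple and undirected. A set $I$ of vertices of a graph $G$ is a dissociation set if the induced subgraph $G[I]$ has maximum degree at most $1$; $\mathrm{diss}(G)$ is the maximum order of a dissociation set in $G$. $\alpha(G)$ is the independence number. An induced matching is a matching $N$ such that the subgraph of $G$ induced by the vertices covered by $N$ has edge set exactly $N$; $\nu_s(G)$ is the maximum size of an induced matching in $G$. *)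

theory Defs
  imports Main
begin

definition simple_graph :: "'a set \<Rightarrow> ('a \<Rightarrow> 'a \<Rightarrow> bool) \<Rightarrow> bool" where
  "simple_graph V E \<longleftrightarrow> finite V \<and> (\<forall>x y. E x y \<longrightarrow> E y x) \<and> (\<forall>x. \<not> E x x)
     \<and> (\<forall>x y. E x y \<longrightarrow> x \<in> V \<and> y \<in> V)"

definition independent_set :: "'a set \<Rightarrow> ('a \<Rightarrow> 'a \<Rightarrow> bool) \<Rightarrow> 'a set \<Rightarrow> bool" where
  "independent_set V E I \<longleftrightarrow> I \<subseteq> V \<and> (\<forall>x\<in>I. \<forall>y\<in>I. \<not> E x y)"

definition dissociation_set :: "'a set \<Rightarrow> ('a \<Rightarrow> 'a \<Rightarrow> bool) \<Rightarrow> 'a set \<Rightarrow> bool" where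
  "dissociation_set V E I \<longleftrightarrow> I \<subseteq> V \<and> (\<forall>x\<in>I. card {y\<in>I. E x y} \<le> 1)"

definition edges :: "'a set \<Rightarrow> ('a \<Rightarrow> 'a \<Rightarrow> bool) \<Rightarrow> 'a set set" where
  "edges V E = {{x, y} | x y. x \<in> V \<and> y \<in> V \<and> E x y}"

definition induced_matching :: "'a set \<Rightarrow> ('a \<Rightarrow> 'a \<Rightarrow> bool) \<Rightarrow> 'a set set \<Rightarrow> bool" where
  "induced_matching V E N \<longleftrightarrow> N \<subseteq> edges V E
     \<and> (\<forall>e\<in>N. \<forall>f\<in>N. e \<noteq> f \<longrightarrow> e \<inter> f = {})
     \<and> (\<forall>x\<in>\<Union>N. \<forall>y\<in>\<Union>N. E x y \<longrightarrow> {x, y} \<in> N)"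

definition alpha :: "'a set \<Rightarrow> ('a \<Rightarrow> 'a \<Rightarrow> bool) \<Rightarrow> nat" where
  "alpha V E = Max {card I | I. independent_set V E I}"

definition diss :: "'a set \<Rightarrow> ('a \<Rightarrow> 'a \<Rightarrow> bool) \<Rightarrow> nat" where
  "diss V E = Max {card I | I. dissociation_set V E I}"

definition nu_s :: "'a set \<Rightarrow> ('a \<Rightarrow> 'a \<Rightarrow> bool) \<Rightarrow> nat" where
  "nu_s V E = Max {card N | N. induced_matching V E N}"

text \<open>The construction H. Vertices: Inl (Inl u) for u in V (the copy of V),
  Inl (Inr u) for u in V (the new vertex u'), Inr i for i < 2(k-1) (the set W).
  The k-1 disjoint edges on W are {2j, 2j+1}.\<close>
definition H_verts :: "'a set \<Rightarrow> nat \<Rightarrow> (('a + 'a) + nat) set" where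
  "H_verts V k = Inl ` Inl ` V \<union> Inl ` Inr ` V \<union> Inr ` {0..<2*(k-1)}"

fun H_adj0 :: "('a \<Rightarrow> 'a \<Rightarrow> bool) \<Rightarrow> ('a + 'a) + nat \<Rightarrow> ('a + 'a) + nat \<Rightarrow> bool" where
  "H_adj0 E (Inl (Inl u)) (Inl (Inl v)) = E u v"
| "H_adj0 E (Inl (Inl u)) (Inl (Inr v)) = (u = v)"
| "H_adj0 E (Inl (Inr u)) (Inl (Inl v)) = (u = v)"
| "H_adj0 E (Inl (Inr u)) (Inl (Inr v)) = False"
| "H_adj0 E (Inl (Inl u)) (Inr j) = True"
| "H_adj0 E (Inr i) (Inl (Inl v)) = True"
| "H_adj0 E (Inl (Inr u)) (Inr j) = False"
| "H_adj0 E (Inr i) (Inl (Inr v)) = False"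
| "H_adj0 E (Inr i) (Inr j) = (i \<noteq> j \<and> i div 2 = j div 2)"

definition H_adj :: "'a set \<Rightarrow> ('a \<Rightarrow> 'a \<Rightarrow> bool) \<Rightarrow> nat \<Rightarrow> ('a + 'a) + nat \<Rightarrow> ('a + 'a) + nat \<Rightarrow> bool" where
  "H_adj V E k x y \<longleftrightarrow> x \<in> H_verts V k \<and> y \<in> H_verts V k \<and> H_adj0 E x y"

end

theory Submission
  imports Defs
begin

lemma HV_simps[simp]:
  "Inl (Inl u) \<in> H_verts V k \<longleftrightarrow> u \<in> V"
  "Inl (Inr u) \<in> H_verts V k \<longleftrightarrow> u \<in> V"
  "Inr i \<in> H_verts V k \<longleftrightarrow> i < 2*(k-1)"
  by (auto simp: H_verts_def)

lemma vcases:
  obtains u where "x = Inl (Inl u)" | u where "x = Inl (Inr u)" | i where "x = Inr i"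
  by (metis sum.exhaust)

lemma finite_HV: "finite V \<Longrightarrow> finite (H_verts V k)" by (simp add: H_verts_def)

lemma H_adj0_sym: assumes "\<And>x y. E x y \<Longrightarrow> E y x" "H_adj0 E x y" shows "H_adj0 E y x"
  using assms by (cases x rule: vcases; cases y rule: vcases) auto

lemma H_adj0_B: "H_adj0 E (Inl (Inr u)) y \<Longrightarrow> y = Inl (Inl u)"
  by (cases y rule: vcases) auto

lemma fin_cards: assumes "finite S" "\<And>I. P I \<Longrightarrow> I \<subseteq> S" shows "finite {card I | I. P I}"
proof -
  have "{card I | I. P I} \<subseteq> card ` Pow S" using assms(2) by auto
  thus ?thesis using assms(1) by (meson finite_Pow_iff finite_imageI finite_subset)
qed

lemma Max_cards_ge: assumes "finite S" "\<And>I. P I \<Longrightarrow> I \<subseteq> S" "P J"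
  shows "card J \<le> Max {card I | I. P I}"
  by (rule Max_ge[OF fin_cards[OF assms(1,2)]]) (use assms(3) in auto)

lemma Max_cards_le: assumes "finite S" "\<And>I. P I \<Longrightarrow> I \<subseteq> S" "P J" "\<And>I. P I \<Longrightarrow> card I \<le> c"
  shows "Max {card I | I. P I} \<le> c"
  using assms by (subst Max_le_iff[OF fin_cards[OF assms(1,2)]]) auto

lemma Max_cards_obtain: assumes "finite S" "\<And>I. P I \<Longrightarrow> I \<subseteq> S" "P J"
  obtains I where "P I" "card I = Max {card I | I. P I}"
proof -
  have "Max {card I | I. P I} \<in> {card I | I. P I}"
    by (rule Max_in[OF fin_cards[OF assms(1,2)]]) (use assms(3) in auto)
  thus ?thesis using that by auto
qed

fun pr :: "('a + 'a) + nat \<Rightarrow> 'a + nat" where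
  "pr (Inl (Inl u)) = Inl u"
| "pr (Inl (Inr u)) = Inl u"
| "pr (Inr i) = Inr (i div 2)"

lemma alpha_le:
  assumes fin: "finite V" and ind: "independent_set (H_verts V k) (H_adj V E k) I"
  shows "card I \<le> card V + (k-1)"
proof -
  have sub: "I \<subseteq> H_verts V k" using ind unfolding independent_set_def by blast
  have inj: "inj_on pr I"
  proof (rule inj_onI)
    fix x y assume xy: "x \<in> I" "y \<in> I" "pr x = pr y"
    show "x = y"
    proof (rule ccontr)
      assume ne: "x \<noteq> y"
      have hx: "x \<in> H_verts V k" "y \<in> H_verts V k" using xy sub by auto
      have "H_adj V E k x y"
        using xy ne hx by (cases x rule: vcases; cases y rule: vcases) (auto simp: H_adj_def)
      thus False using ind xy unfolding independent_set_def by blast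
    qed
  qed
  have "pr ` I \<subseteq> Inl ` V \<union> Inr ` {..<k-1}"
  proof
    fix z assume "z \<in> pr ` I"
    then obtain x where x: "x \<in> I" "z = pr x" by auto
    hence "x \<in> H_verts V k" using sub by auto
    thus "z \<in> Inl ` V \<union> Inr ` {..<k-1}" using x
      by (cases x rule: vcases) (auto simp: less_mult_imp_div_less)
  qed
  hence "card (pr ` I) \<le> card (Inl ` V \<union> Inr ` {..<k-1})"
    by (rule card_mono[rotated]) (use fin in auto)
  also have "\<dots> \<le> card (Inl ` V :: ('a + nat) set) + card (Inr ` {..<k-1} :: ('a + nat) set)"
    by (rule card_Un_le)
  also have "\<dots> = card V + (k-1)" by (simp add: card_image)
  finally show ?thesis using card_image[OF inj] by simp
qed

lemma div2_other: "(j::nat) \<noteq> i \<Longrightarrow> j div 2 = i div 2 \<Longrightarrow> j = (if even i then i+1 else i-1)"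
  by presburger

lemma div2_pair: "(a::nat) \<noteq> b \<Longrightarrow> a div 2 = b div 2 \<Longrightarrow> (a = 2*(a div 2) \<and> b = 2*(a div 2)+1) \<or> (a = 2*(a div 2)+1 \<and> b = 2*(a div 2))"
  by presburger

lemma alpha_ge:
  assumes fin: "finite V"
  shows "\<exists>J. independent_set (H_verts V k) (H_adj V E k) J \<and> card J = card V + (k-1)"
proof -
  let ?J = "Inl ` Inr ` V \<union> (\<lambda>j. Inr (2*j)) ` {..<k-1} :: (('a+'a)+nat) set"
  have "independent_set (H_verts V k) (H_adj V E k) ?J"
    unfolding independent_set_def H_adj_def by auto
  moreover have "card ?J = card V + (k-1)"
  proof -
    have "inj_on (\<lambda>j. Inr (2*j) :: ('a+'a)+nat) {..<k-1}" by (auto simp: inj_on_def)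
    hence c: "card ((\<lambda>j. Inr (2*j) :: ('a+'a)+nat) ` {..<k-1}) = k-1" by (simp add: card_image)
    have "card ?J = card (Inl ` Inr ` V :: (('a+'a)+nat) set) + card ((\<lambda>j. Inr (2*j) :: ('a+'a)+nat) ` {..<k-1})"
      by (rule card_Un_disjoint) (use fin in auto)
    thus ?thesis using c by (simp add: card_image)
  qed
  ultimately show ?thesis by blast
qed

lemma diss_le:
  assumes fin: "finite V" and lt: "card V < 2*(k-1)"
    and D: "dissociation_set (H_verts V k) (H_adj V E k) I"
  shows "card I \<le> card V + 2*(k-1)"
proof -
  let ?A = "Inl ` Inl ` V :: (('a+'a)+nat) set"
  let ?B = "Inl ` Inr ` V :: (('a+'a)+nat) set"
  let ?W = "Inr ` {..<2*(k-1)} :: (('a+'a)+nat) set"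
  have cA: "card ?A = card V" and cB: "card ?B = card V" and cW: "card ?W = 2*(k-1)"
    by (simp_all add: card_image)
  have sub: "I \<subseteq> H_verts V k" using D unfolding dissociation_set_def by blast
  have finI: "finite I" using sub finite_HV[OF fin] finite_subset by blast
  have HV: "H_verts V k = ?A \<union> ?B \<union> ?W" by (auto simp: H_verts_def)
  show ?thesis
  proof (cases "\<exists>u. Inl (Inl u) \<in> I")
    case True
    then obtain u where u: "Inl (Inl u) \<in> I" by blast
    hence uV: "u \<in> V" using sub by auto
    have "I \<inter> ?W \<subseteq> {y\<in>I. H_adj V E k (Inl (Inl u)) y}"
      using uV by (auto simp: H_adj_def)
    hence "card (I \<inter> ?W) \<le> card {y\<in>I. H_adj V E k (Inl (Inl u)) y}"
      by (rule card_mono[rotated]) (use finI in auto)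
    also have "\<dots> \<le> 1" using D u unfolding dissociation_set_def by blast
    finally have c1: "card (I \<inter> ?W) \<le> 1" .
    have "I \<subseteq> ?A \<union> ?B \<union> (I \<inter> ?W)"
    proof
      fix x assume x: "x \<in> I"
      hence "x \<in> H_verts V k" using sub by blast
      thus "x \<in> ?A \<union> ?B \<union> (I \<inter> ?W)" using x by (cases x rule: vcases) auto
    qed
    hence "card I \<le> card (?A \<union> ?B \<union> (I \<inter> ?W))"
      by (rule card_mono[rotated]) (use fin in auto)
    also have "\<dots> \<le> card (?A \<union> ?B) + card (I \<inter> ?W)" by (rule card_Un_le)
    also have "\<dots> \<le> card ?A + card ?B + card (I \<inter> ?W)" using card_Un_le[of ?A ?B] by linarith
    finally show ?thesis using cA cB c1 lt by linarith
  next
    case False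
    have "I \<subseteq> ?B \<union> ?W"
    proof
      fix x assume x: "x \<in> I"
      hence "x \<in> H_verts V k" using sub by blast
      thus "x \<in> ?B \<union> ?W" using x False by (cases x rule: vcases) auto
    qed
    hence "card I \<le> card (?B \<union> ?W)"
      by (rule card_mono[rotated]) (use fin in auto)
    also have "\<dots> \<le> card ?B + card ?W" by (rule card_Un_le)
    finally show ?thesis using cB cW by linarith
  qed
qed

lemma diss_ge:
  assumes fin: "finite V"
  shows "\<exists>J. dissociation_set (H_verts V k) (H_adj V E k) J \<and> card J = card V + 2*(k-1)"
proof -
  let ?B = "Inl ` Inr ` V :: (('a+'a)+nat) set"
  let ?W = "Inr ` {..<2*(k-1)} :: (('a+'a)+nat) set"
  let ?D = "?B \<union> ?W"
  have "dissociation_set (H_verts V k) (H_adj V E k) ?D"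
    unfolding dissociation_set_def
  proof (intro conjI ballI)
    show "?D \<subseteq> H_verts V k" by auto
    fix x assume x: "x \<in> ?D"
    show "card {y\<in>?D. H_adj V E k x y} \<le> 1"
    proof (cases "x \<in> ?B")
      case True
      then obtain u where "x = Inl (Inr u)" by auto
      hence "{y\<in>?D. H_adj V E k x y} = {}" by (auto simp: H_adj_def)
      then show ?thesis by (metis card.empty zero_le_one)
    next
      case False
      then obtain i where i: "x = Inr i" using x by auto
      have "{y\<in>?D. H_adj V E k x y} \<subseteq> {Inr (if even i then i+1 else i-1)}"
      proof
        fix y assume "y \<in> {y\<in>?D. H_adj V E k x y}"
        then obtain j where j: "y = Inr j" "j \<noteq> i" "j div 2 = i div 2"
          using i by (auto simp: H_adj_def)
        have "j = (if even i then i+1 else i-1)" using j(2,3) by (rule div2_other)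
        thus "y \<in> {Inr (if even i then i+1 else i-1)}" using j by simp
      qed
      hence "card {y\<in>?D. H_adj V E k x y} \<le> card {Inr (if even i then i+1 else i-1) :: ('a+'a)+nat}"
        by (rule card_mono[rotated]) simp
      thus ?thesis by simp
    qed
  qed
  moreover have "card ?D = card V + 2*(k-1)"
  proof -
    have "card ?D = card ?B + card ?W" by (rule card_Un_disjoint) (use fin in auto)
    thus ?thesis by (simp add: card_image)
  qed
  ultimately show ?thesis by blast
qed

lemma pair_in_M:
  assumes "x \<in> \<Union>((\<lambda>q. {Inr (2*q), Inr (2*q+1)} :: (('a+'a)+nat) set) ` {..<k-1})"
  shows "\<exists>a. x = Inr a \<and> a < 2*(k-1)"
proof -
  obtain q where q: "q < k-1" "x \<in> {Inr (2*q), Inr (2*q+1)}" using assms by blast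
  have "2*q < 2*(k-1)" "2*q+1 < 2*(k-1)" using q(1) by linarith+
  thus ?thesis using q(2) by blast
qed

lemma pair_disj: "(q::nat) \<noteq> q' \<Longrightarrow> {Inr (2*q), Inr (2*q+1)} \<inter> {Inr (2*q'), Inr (2*q'+1)} = ({} :: (('a+'a)+nat) set)"
proof -
  assume "q \<noteq> q'"
  hence "2*q \<noteq> 2*q'" "2*q \<noteq> 2*q'+1" "2*q+1 \<noteq> 2*q'" "2*q+1 \<noteq> 2*q'+1" by presburger+
  thus ?thesis by auto
qed

lemma nu_ge:
  shows "\<exists>N. induced_matching (H_verts V k) (H_adj V E k) N \<and> card N = k-1"
proof -
  define M where "M = (\<lambda>q. {Inr (2*q), Inr (2*q+1)} :: (('a+'a)+nat) set) ` {..<k-1}"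
  have "induced_matching (H_verts V k) (H_adj V E k) M"
    unfolding induced_matching_def
  proof (intro conjI ballI impI)
    show "M \<subseteq> edges (H_verts V k) (H_adj V E k)"
    proof
      fix e assume "e \<in> M"
      then obtain q where q: "q < k-1" "e = {Inr (2*q), Inr (2*q+1)}" by (auto simp: M_def)
      have m: "Inr (2*q) \<in> H_verts V k" "Inr (2*q+1) \<in> H_verts V k" using q(1) by simp_all
      have "H_adj V E k (Inr (2*q)) (Inr (2*q+1))" using m by (simp add: H_adj_def)
      thus "e \<in> edges (H_verts V k) (H_adj V E k)"
        unfolding edges_def using q(2) m by blast
    qed
  next
    fix e f assume "e \<in> M" "f \<in> M" "e \<noteq> f"
    then obtain q q' where "e = {Inr (2*q), Inr (2*q+1)}" "f = {Inr (2*q'), Inr (2*q'+1)}" "q \<noteq> q'"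
      unfolding M_def by blast
    thus "e \<inter> f = {}" using pair_disj by blast
  next
    fix x y assume xy: "x \<in> \<Union>M" "y \<in> \<Union>M" "H_adj V E k x y"
    obtain a where a: "x = Inr a" "a < 2*(k-1)" using pair_in_M xy(1) unfolding M_def by blast
    obtain b where b: "y = Inr b" using pair_in_M xy(2) unfolding M_def by blast
    have ab: "a \<noteq> b" "a div 2 = b div 2" using xy(3) a b by (simp_all add: H_adj_def)
    have dd: "(a = 2*(a div 2) \<and> b = 2*(a div 2)+1) \<or> (a = 2*(a div 2)+1 \<and> b = 2*(a div 2))"
      using ab by (rule div2_pair)
    have lt: "a div 2 < k-1" using a(2) by (simp add: less_mult_imp_div_less)
    have "{x, y} = {Inr (2*(a div 2)), Inr (2*(a div 2)+1)}"
      using dd a(1) b by auto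
    thus "{x, y} \<in> M" unfolding M_def using lt by blast
  qed
  moreover have "card M = k-1"
  proof -
    have "inj_on (\<lambda>q. {Inr (2*q), Inr (2*q+1)} :: (('a+'a)+nat) set) {..<k-1}"
    proof (rule inj_onI)
      fix q q' assume "{Inr (2*q), Inr (2*q+1)} = ({Inr (2*q'), Inr (2*q'+1)} :: (('a+'a)+nat) set)"
      thus "q = q'" using pair_disj[of q q'] by blast
    qed
    thus ?thesis unfolding M_def by (simp add: card_image)
  qed
  ultimately show ?thesis by blast
qed

lemma im_sub: "induced_matching HV HE N \<Longrightarrow> N \<subseteq> Pow HV"
  unfolding induced_matching_def edges_def by blast

lemma alpha_to_nu:
  assumes S: "independent_set V E S"
  shows "\<exists>N. induced_matching (H_verts V k) (H_adj V E k) N \<and> card N = card S"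
proof -
  define N where "N = (\<lambda>u. {Inl (Inl u), Inl (Inr u)} :: (('a+'a)+nat) set) ` S"
  have SV: "S \<subseteq> V" and indS: "\<And>u v. u\<in>S \<Longrightarrow> v\<in>S \<Longrightarrow> \<not> E u v"
    using S unfolding independent_set_def by auto
  have "induced_matching (H_verts V k) (H_adj V E k) N" unfolding induced_matching_def
  proof (intro conjI ballI impI)
    show "N \<subseteq> edges (H_verts V k) (H_adj V E k)"
    proof
      fix e assume "e \<in> N"
      then obtain u where u: "u \<in> S" "e = {Inl (Inl u), Inl (Inr u)}" unfolding N_def by blast
      have m: "Inl (Inl u) \<in> H_verts V k" "Inl (Inr u) \<in> H_verts V k" using u SV by auto
      have "H_adj V E k (Inl (Inl u)) (Inl (Inr u))" using m by (simp add: H_adj_def)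
      thus "e \<in> edges (H_verts V k) (H_adj V E k)" unfolding edges_def using u(2) m by blast
    qed
  next
    fix e f assume "e \<in> N" "f \<in> N" "e \<noteq> f"
    then obtain u v where "e = {Inl (Inl u), Inl (Inr u)}" "f = {Inl (Inl v), Inl (Inr v)}" "u \<noteq> v"
      unfolding N_def by blast
    thus "e \<inter> f = {}" by auto
  next
    fix x y assume xy: "x \<in> \<Union>N" "y \<in> \<Union>N" "H_adj V E k x y"
    obtain u where u: "u \<in> S" "x = Inl (Inl u) \<or> x = Inl (Inr u)" using xy(1) unfolding N_def by blast
    obtain v where v: "v \<in> S" "y = Inl (Inl v) \<or> y = Inl (Inr v)" using xy(2) unfolding N_def by blast
    have h: "H_adj0 E x y" using xy(3) by (simp add: H_adj_def)
    show "{x, y} \<in> N"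
      using u(2)
    proof
      assume x: "x = Inl (Inl u)"
      show ?thesis using v(2)
      proof
        assume "y = Inl (Inl v)" thus ?thesis using x h indS u(1) v(1) by simp
      next
        assume "y = Inl (Inr v)" thus ?thesis using x h u(1) unfolding N_def by auto
      qed
    next
      assume x: "x = Inl (Inr u)"
      show ?thesis using v(2)
      proof
        assume "y = Inl (Inl v)" thus ?thesis using x h u(1) unfolding N_def by (auto simp: insert_commute)
      next
        assume "y = Inl (Inr v)" thus ?thesis using x h by simp
      qed
    qed
  qed
  moreover have "card N = card S"
  proof -
    have "inj_on (\<lambda>u. {Inl (Inl u), Inl (Inr u)} :: (('a+'a)+nat) set) S"
      by (rule inj_onI) (auto simp: doubleton_eq_iff)
    thus ?thesis unfolding N_def by (simp add: card_image)
  qed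
  ultimately show ?thesis by blast
qed

lemma nu_to_alpha:
  assumes G: "simple_graph V E" and IM: "induced_matching (H_verts V k) (H_adj V E k) N"
    and big: "k - 1 < card N" and two: "2 \<le> card N"
  shows "\<exists>S. independent_set V E S \<and> card S = card N"
proof -
  have finV: "finite V" and irr: "\<And>x. \<not> E x x" and symE: "\<And>x y. E x y \<Longrightarrow> E y x"
    using G unfolding simple_graph_def by auto
  have edge: "\<And>e. e \<in> N \<Longrightarrow> \<exists>x y. e = {x,y} \<and> x \<in> H_verts V k \<and> y \<in> H_verts V k \<and> H_adj0 E x y"
  proof -
    fix e assume "e \<in> N"
    moreover have "N \<subseteq> edges (H_verts V k) (H_adj V E k)" using IM by (simp add: induced_matching_def)
    ultimately have "e \<in> edges (H_verts V k) (H_adj V E k)" by (rule subsetD[rotated])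
    hence "\<exists>x y. e = {x,y} \<and> x \<in> H_verts V k \<and> y \<in> H_verts V k \<and> H_adj V E k x y"
      unfolding edges_def by simp
    thus "\<exists>x y. e = {x,y} \<and> x \<in> H_verts V k \<and> y \<in> H_verts V k \<and> H_adj0 E x y"
      unfolding H_adj_def by blast
  qed
  have disj: "\<And>g e z. g \<in> N \<Longrightarrow> e \<in> N \<Longrightarrow> z \<in> g \<Longrightarrow> z \<in> e \<Longrightarrow> g = e"
  proof (rule ccontr)
    fix g e z assume a: "g \<in> N" "e \<in> N" "z \<in> g" "z \<in> e" "g \<noteq> e"
    hence "g \<inter> e = {}" using IM[unfolded induced_matching_def, THEN conjunct2, THEN conjunct1] by blast
    thus False using a by blast
  qed
  have ind: "\<And>x y. x \<in> \<Union>N \<Longrightarrow> y \<in> \<Union>N \<Longrightarrow> H_adj V E k x y \<Longrightarrow> {x,y} \<in> N"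
    using IM[unfolded induced_matching_def, THEN conjunct2, THEN conjunct2] by blast
  have inHV: "\<And>e z. e \<in> N \<Longrightarrow> z \<in> e \<Longrightarrow> z \<in> H_verts V k"
  proof -
    fix e z assume "e \<in> N" "z \<in> e"
    then obtain x y where "e = {x,y}" "x \<in> H_verts V k" "y \<in> H_verts V k" using edge by blast
    thus "z \<in> H_verts V k" using \<open>z \<in> e\<close> by blast
  qed
  have L1: "\<And>e f u i. e \<in> N \<Longrightarrow> f \<in> N \<Longrightarrow> Inl (Inl u) \<in> f \<Longrightarrow> Inr i \<in> e \<Longrightarrow> e = f"
  proof -
    fix e f u i assume a: "e \<in> N" "f \<in> N" "Inl (Inl u) \<in> f" "Inr i \<in> e"
    have "Inl (Inl u) \<in> H_verts V k" "Inr i \<in> H_verts V k" using a inHV by blast+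
    hence "H_adj V E k (Inl (Inl u)) (Inr i)" by (simp add: H_adj_def)
    hence g: "{Inl (Inl u), Inr i} \<in> N" using ind a by blast
    have "{Inl (Inl u), Inr i} = e" using disj[OF g a(1)] a(4) by blast
    moreover have "{Inl (Inl u), Inr i} = f" using disj[OF g a(2)] a(3) by blast
    ultimately show "e = f" by simp
  qed
  have AW: "\<And>e. e \<in> N \<Longrightarrow> (\<exists>u. Inl (Inl u) \<in> e) \<or> (\<exists>i. Inr i \<in> e)"
  proof -
    fix e assume "e \<in> N"
    then obtain x y where xy: "e = {x,y}" "H_adj0 E x y" using edge by blast
    show "(\<exists>u. Inl (Inl u) \<in> e) \<or> (\<exists>i. Inr i \<in> e)"
    proof (cases x rule: vcases)
      case (2 u) then have "y = Inl (Inl u)" using xy(2) H_adj0_B[of E u y] by simp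
      thus ?thesis using xy by blast
    qed (use xy in auto)
  qed
  show ?thesis
  proof (cases "\<exists>e\<in>N. \<exists>i. Inr i \<in> e")
    case True
    then obtain e i where e: "e \<in> N" "Inr i \<in> e" by blast
    have noA: "\<And>f u. f \<in> N \<Longrightarrow> Inl (Inl u) \<notin> f"
    proof
      fix f u assume f: "f \<in> N" "Inl (Inl u) \<in> f"
      have "e = f" using L1[OF e(1) f(1) f(2) e(2)] .
      hence zu: "Inl (Inl u) \<in> e" using f by simp
      have "N \<noteq> {e}" using two by auto
      then obtain f' where f': "f' \<in> N" "f' \<noteq> e" using e(1) by blast
      from AW[OF f'(1)] show False
      proof
        assume "\<exists>u'. Inl (Inl u') \<in> f'"
        then obtain u' where "Inl (Inl u') \<in> f'" by blast
        thus False using L1[OF e(1) f'(1) _ e(2)] f'(2) by blast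
      next
        assume "\<exists>j. Inr j \<in> f'"
        then obtain j where "Inr j \<in> f'" by blast
        thus False using L1[OF f'(1) e(1) zu] f'(2) by blast
      qed
    qed
    have sub: "N \<subseteq> (\<lambda>q. {Inr (2*q), Inr (2*q+1)}) ` {..<k-1}"
    proof
      fix f assume f: "f \<in> N"
      then obtain x y where xy: "f = {x,y}" "x \<in> H_verts V k" "y \<in> H_verts V k" "H_adj0 E x y"
        using edge by blast
      have yx: "H_adj0 E y x" using H_adj0_sym[OF symE xy(4)] .
      have xA: "\<And>u. x \<noteq> Inl (Inl u)" "\<And>u. y \<noteq> Inl (Inl u)" using noA[OF f] xy(1) by auto
      obtain a where a: "x = Inr a"
      proof (cases x rule: vcases)
        case (1 u) thus ?thesis using xA by blast
      next
        case (2 u) thus ?thesis using xy(4) H_adj0_B[of E u y] xA by simp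
      next
        case (3 i) thus ?thesis using that by blast
      qed
      obtain b where b: "y = Inr b"
      proof (cases y rule: vcases)
        case (1 u) thus ?thesis using xA by blast
      next
        case (2 u) thus ?thesis using yx H_adj0_B[of E u x] xA by simp
      next
        case (3 i) thus ?thesis using that by blast
      qed
      have a2: "a < 2*(k-1)" using xy(2) a by simp
      have ab: "a \<noteq> b" "a div 2 = b div 2" using xy(4) a b by simp_all
      have dd: "(a = 2*(a div 2) \<and> b = 2*(a div 2)+1) \<or> (a = 2*(a div 2)+1 \<and> b = 2*(a div 2))"
        using ab by (rule div2_pair)
      have lt: "a div 2 < k-1" using a2 by (simp add: less_mult_imp_div_less)
      have "f = {Inr (2*(a div 2)), Inr (2*(a div 2)+1)}"
        using dd a b xy(1) by auto
      thus "f \<in> (\<lambda>q. {Inr (2*q), Inr (2*q+1)}) ` {..<k-1}" using lt by blast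
    qed
    have "card N \<le> card ((\<lambda>q. {Inr (2*q), Inr (2*q+1)} :: (('a+'a)+nat) set) ` {..<k-1})"
      by (rule card_mono[OF _ sub]) simp
    also have "\<dots> \<le> card {..<k-1}" by (rule card_image_le) simp
    finally show ?thesis using big by simp
  next
    case False
    hence hasA: "\<And>e. e \<in> N \<Longrightarrow> \<exists>u. Inl (Inl u) \<in> e" using AW by blast
    define a where "a e = (SOME u. Inl (Inl u) \<in> e)" for e :: "(('a+'a)+nat) set"
    have a: "\<And>e. e \<in> N \<Longrightarrow> Inl (Inl (a e)) \<in> e" unfolding a_def using hasA by (metis someI_ex)
    have inj: "inj_on a N"
    proof (rule inj_onI)
      fix e f assume "e \<in> N" "f \<in> N" "a e = a f"
      thus "e = f" using a[of e] a[of f] disj by metis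
    qed
    have SV: "a ` N \<subseteq> V"
    proof
      fix u assume "u \<in> a ` N"
      then obtain e where "e \<in> N" "u = a e" by blast
      thus "u \<in> V" using a inHV by (metis HV_simps(1))
    qed
    have "independent_set V E (a ` N)"
      unfolding independent_set_def
    proof (intro conjI ballI)
      show "a ` N \<subseteq> V" by (rule SV)
      fix u v assume uv: "u \<in> a ` N" "v \<in> a ` N"
      then obtain e f where ef: "e \<in> N" "f \<in> N" "u = a e" "v = a f" by blast
      show "\<not> E u v"
      proof
        assume Euv: "E u v"
        have m: "u \<in> V" "v \<in> V" using uv SV by auto
        have "H_adj V E k (Inl (Inl u)) (Inl (Inl v))" using m Euv by (simp add: H_adj_def)
        moreover have "Inl (Inl u) \<in> \<Union>N" "Inl (Inl v) \<in> \<Union>N" using ef a by auto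
        ultimately have g: "{Inl (Inl u), Inl (Inl v)} \<in> N" using ind by blast
        have "{Inl (Inl u), Inl (Inl v)} = e" using disj[OF g ef(1)] a[OF ef(1)] ef(3) by blast
        moreover have "{Inl (Inl u), Inl (Inl v)} = f" using disj[OF g ef(2)] a[OF ef(2)] ef(4) by blast
        ultimately have "u = v" using ef by simp
        thus False using Euv irr by simp
      qed
    qed
    moreover have "card (a ` N) = card N" by (rule card_image[OF inj])
    ultimately show ?thesis by blast
  qed
qed

theorem mainTheorem10:
  fixes V :: "'a set" and E :: "'a \<Rightarrow> 'a \<Rightarrow> bool" and k :: nat
  assumes "simple_graph V E"
    and "2 \<le> card V" and "card V < 2 * (k - 1)"
  shows "alpha (H_verts V k) (H_adj V E k) = card V + k - 1
    \<and> diss (H_verts V k) (H_adj V E k) = card V + 2 * (k - 1)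
    \<and> k - 1 \<le> nu_s (H_verts V k) (H_adj V E k)
    \<and> (k \<le> alpha V E \<longleftrightarrow> k \<le> nu_s (H_verts V k) (H_adj V E k))
    \<and> (k \<le> nu_s (H_verts V k) (H_adj V E k) \<longleftrightarrow>
         diss (H_verts V k) (H_adj V E k) \<noteq>
           alpha (H_verts V k) (H_adj V E k) + nu_s (H_verts V k) (H_adj V E k))"
proof -
  have finV: "finite V" using assms(1) unfolding simple_graph_def by blast
  have finH: "finite (H_verts V k)" using finite_HV[OF finV] .
  have k3: "3 \<le> k" using assms(2,3) by linarith
  have subI: "\<And>I. independent_set (H_verts V k) (H_adj V E k) I \<Longrightarrow> I \<subseteq> H_verts V k"
    by (simp add: independent_set_def)
  have subD: "\<And>I. dissociation_set (H_verts V k) (H_adj V E k) I \<Longrightarrow> I \<subseteq> H_verts V k"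
    by (simp add: dissociation_set_def)
  have subN: "\<And>N. induced_matching (H_verts V k) (H_adj V E k) N \<Longrightarrow> N \<subseteq> Pow (H_verts V k)"
    by (rule im_sub)
  have finP: "finite (Pow (H_verts V k))" using finH by simp
  have subG: "\<And>I. independent_set V E I \<Longrightarrow> I \<subseteq> V" by (simp add: independent_set_def)
  obtain J where J: "independent_set (H_verts V k) (H_adj V E k) J" "card J = card V + (k-1)"
    using alpha_ge[OF finV] by blast
  have aH: "alpha (H_verts V k) (H_adj V E k) = card V + (k-1)"
    unfolding alpha_def
  proof (rule antisym)
    show "Max {card I |I. independent_set (H_verts V k) (H_adj V E k) I} \<le> card V + (k - 1)"
      by (rule Max_cards_le[where P="independent_set (H_verts V k) (H_adj V E k)", OF finH subI J(1) alpha_le[OF finV]])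
    show "card V + (k - 1) \<le> Max {card I |I. independent_set (H_verts V k) (H_adj V E k) I}"
      using Max_cards_ge[where P="independent_set (H_verts V k) (H_adj V E k)", OF finH subI J(1)] J(2)
      by simp
  qed
  obtain D where D: "dissociation_set (H_verts V k) (H_adj V E k) D" "card D = card V + 2*(k-1)"
    using diss_ge[OF finV] by blast
  have dH: "diss (H_verts V k) (H_adj V E k) = card V + 2*(k-1)"
    unfolding diss_def
  proof (rule antisym)
    show "Max {card I |I. dissociation_set (H_verts V k) (H_adj V E k) I} \<le> card V + 2*(k - 1)"
      by (rule Max_cards_le[where P="dissociation_set (H_verts V k) (H_adj V E k)", OF finH subD D(1) diss_le[OF finV assms(3)]])
    show "card V + 2*(k - 1) \<le> Max {card I |I. dissociation_set (H_verts V k) (H_adj V E k) I}"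
      using Max_cards_ge[where P="dissociation_set (H_verts V k) (H_adj V E k)", OF finH subD D(1)] D(2)
      by simp
  qed
  obtain M where M: "induced_matching (H_verts V k) (H_adj V E k) M" "card M = k-1"
    using nu_ge by blast
  have nuge: "k - 1 \<le> nu_s (H_verts V k) (H_adj V E k)"
    unfolding nu_s_def
    using Max_cards_ge[where P="induced_matching (H_verts V k) (H_adj V E k)", OF finP subN M(1)] M(2)
    by simp
  have eq: "k \<le> alpha V E \<longleftrightarrow> k \<le> nu_s (H_verts V k) (H_adj V E k)"
  proof
    assume ka: "k \<le> alpha V E"
    have e0: "independent_set V E {}" by (simp add: independent_set_def)
    obtain S where S: "independent_set V E S" "card S = alpha V E"
      using Max_cards_obtain[where P="independent_set V E", OF finV subG e0] unfolding alpha_def by blast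
    obtain N where N: "induced_matching (H_verts V k) (H_adj V E k) N" "card N = card S"
      using alpha_to_nu[OF S(1)] by blast
    have "card N \<le> nu_s (H_verts V k) (H_adj V E k)"
      unfolding nu_s_def
      by (rule Max_cards_ge[where P="induced_matching (H_verts V k) (H_adj V E k)", OF finP subN N(1)])
    thus "k \<le> nu_s (H_verts V k) (H_adj V E k)" using ka S(2) N(2) by linarith
  next
    assume kn: "k \<le> nu_s (H_verts V k) (H_adj V E k)"
    obtain N where N: "induced_matching (H_verts V k) (H_adj V E k) N"
      "card N = nu_s (H_verts V k) (H_adj V E k)"
      using Max_cards_obtain[where P="induced_matching (H_verts V k) (H_adj V E k)", OF finP subN M(1)]
      unfolding nu_s_def by blast
    have c1: "k - 1 < card N" and c2: "2 \<le> card N" using kn N(2) k3 by linarith+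
    obtain S where S: "independent_set V E S" "card S = card N"
      using nu_to_alpha[OF assms(1) N(1) c1 c2] by blast
    have "card S \<le> alpha V E" unfolding alpha_def
      by (rule Max_cards_ge[where P="independent_set V E", OF finV subG S(1)])
    thus "k \<le> alpha V E" using kn S(2) N(2) by linarith
  qed
  show ?thesis using aH dH nuge eq k3 by auto
qed

end
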